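(* Let $\beta\in\mathbb{Z}[\mathrm{i}]$ with $|\beta|>1$ and let $D\subset\mathbb{Z}[\mathrm{i}]$ be finite. Let $w_1,w_2,w_3\in D^*$ with $w_2$ non-empty, and suppose $[w_1]_\beta\,(1-\beta^{|w_2|})\neq[w_2]_\beta$. For $j\ge0$ put $u_j=[w_1w_2^jw_3]_\beta$, where $w_2^j$ denotes $w_2$ concatenated $j$ times. If there exist integers $k\ge0$ and $\ell\ge1$ such that $u_k,u_{k+\ell},u_{k+2\ell}$ lie on a common line in $\mathbb{C}$, then $\beta$ is a root of an integer, i.e. $\beta^N\in\mathbb{Z}$ for some integer $N\ge1$.
   Context: For a word $w=w_{n-1}\cdots w_0$ over $D$, $[w]_\beta=\sum_{j=0}^{n-1}w_j\beta^j$ ($w_0$ least significant) and $|w|=n$ is its length. *)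

theory Defs
  imports "HOL-Analysis.Analysis"
begin

definition gauss_int :: "complex \<Rightarrow> bool" where
  "gauss_int z \<longleftrightarrow> Re z \<in> \<int> \<and> Im z \<in> \<int>"

text \<open>A word w = w_{n-1} ... w_0 is the list [w_{n-1}, ..., w_0]; the last list
  element is the least significant digit.\<close>
fun word_val :: "complex \<Rightarrow> complex list \<Rightarrow> complex" where
  "word_val \<beta> [] = 0"
| "word_val \<beta> (x # xs) = x * \<beta> ^ length xs + word_val \<beta> xs"

definition word_pow :: "complex list \<Rightarrow> nat \<Rightarrow> complex list" where
  "word_pow w j = concat (replicate j w)"

end

theory Submission
  imports Defs
begin

lemma wv_append: "word_val b (xs @ ys) = word_val b xs * b ^ length ys + word_val b ys"
  by (induction xs) (auto simp: algebra_simps power_add)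

lemma wp_len: "length (word_pow w j) = j * length w"
  by (induction j) (auto simp: word_pow_def)

lemma wp_val: "word_val b (word_pow w j) * (b ^ length w - 1) = word_val b w * ((b ^ length w) ^ j - 1)"
proof (induction j)
  case 0 then show ?case by (simp add: word_pow_def)
next
  case (Suc j)
  have "word_pow w (Suc j) = w @ word_pow w j" by (simp add: word_pow_def)
  then have "word_val b (word_pow w (Suc j)) = word_val b w * (b ^ length w) ^ j + word_val b (word_pow w j)"
    by (simp add: wv_append wp_len power_mult[symmetric] mult.commute)
  then show ?case using Suc by (simp add: algebra_simps)
qed

lemma gauss_mult: "gauss_int x \<Longrightarrow> gauss_int y \<Longrightarrow> gauss_int (x * y)"
  by (auto simp: gauss_int_def)

lemma gauss_pow: "gauss_int x \<Longrightarrow> gauss_int (x ^ n)"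
  by (induction n) (auto simp: gauss_int_def intro: gauss_mult[unfolded gauss_int_def])

theorem lemma3p3:
  fixes \<beta> :: complex and D :: "complex set" and w1 w2 w3 :: "complex list"
    and k l :: nat
  assumes "gauss_int \<beta>" and "cmod \<beta> > 1"
    and "finite D" and "\<forall>d\<in>D. gauss_int d"
    and "set w1 \<subseteq> D" and "set w2 \<subseteq> D" and "set w3 \<subseteq> D"
    and "w2 \<noteq> []"
    and "word_val \<beta> w1 * (1 - \<beta> ^ length w2) \<noteq> word_val \<beta> w2"
    and "l \<ge> 1"
    and "collinear {word_val \<beta> (w1 @ word_pow w2 k @ w3),
                    word_val \<beta> (w1 @ word_pow w2 (k + l) @ w3),
                    word_val \<beta> (w1 @ word_pow w2 (k + 2 * l) @ w3)}"
  shows "\<exists>N::nat. N \<ge> 1 \<and> \<beta> ^ N \<in> \<int>"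
proof -
  define n where "n = length w2"
  define m where "m = length w3"
  define q where "q = \<beta> ^ n"
  define A where "A = word_val \<beta> w1"
  define B where "B = word_val \<beta> w2"
  define C where "C = word_val \<beta> w3"
  define E where "E = \<beta> ^ m * (A * (q - 1) + B)"
  define F where "F = (q - 1) * C - \<beta> ^ m * B"
  define u where "u j = word_val \<beta> (w1 @ word_pow w2 j @ w3)" for j
  have n1: "n \<ge> 1" using assms(8) by (simp add: n_def Suc_le_eq)
  have b0: "\<beta> \<noteq> 0" using assms(2) by auto
  have normpow: "cmod (\<beta> ^ p) > 1" if "p \<ge> 1" for p
    using assms(2) that by (simp add: norm_power)
  have qj: "q ^ j \<noteq> 1" if "j \<ge> 1" for j
  proof -
    have "q ^ j = \<beta> ^ (n * j)" by (simp add: q_def power_mult)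
    moreover have "n * j \<ge> 1" using n1 that by simp
    ultimately show ?thesis using normpow[of "n*j"] by (metis less_irrefl norm_one)
  qed
  have q1: "q \<noteq> 1" using qj[of 1] by simp
  have E1: "A * (q - 1) + B \<noteq> 0"
  proof
    assume "A * (q - 1) + B = 0"
    then have "A * (1 - q) = B" by (simp add: algebra_simps)
    then show False using assms(9) by (simp add: A_def B_def q_def n_def)
  qed
  have E0: "E \<noteq> 0" using E1 b0 by (simp add: E_def)
  have pc: "(\<beta> ^ a) ^ b = (\<beta> ^ b) ^ a" for a b
    by (metis power_mult mult.commute)
  have uj: "(q - 1) * u j = E * q ^ j + F" for j
  proof -
    have "u j = (A * q ^ j + word_val \<beta> (word_pow w2 j)) * \<beta> ^ m + C"
      by (simp add: u_def wv_append wp_len A_def C_def m_def q_def n_def power_add power_mult[symmetric]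
          algebra_simps)
    then have "(q - 1) * u j = (A * q ^ j * (q - 1) + word_val \<beta> (word_pow w2 j) * (q - 1)) * \<beta> ^ m + (q - 1) * C"
      by (simp add: algebra_simps)
    also have "word_val \<beta> (word_pow w2 j) * (q - 1) = B * (q ^ j - 1)"
      using wp_val[of \<beta> w2 j] by (simp add: q_def n_def B_def)
    finally show ?thesis by (simp add: E_def F_def algebra_simps)
  qed
  define x where "x = u k - u (k + l)"
  define z where "z = u (k + 2 * l) - u (k + l)"
  have x: "(q - 1) * x = E * q ^ k * (1 - q ^ l)"
    using uj[of k] uj[of "k+l"] by (simp add: x_def algebra_simps power_add)
  have q2: "q ^ (k + 2 * l) = q ^ k * q ^ l * q ^ l"
    by (simp add: power_add mult_2)
  have q3: "q ^ (k + 2 * l) = q ^ (k + l) * q ^ l"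
    by (simp add: power_add mult_2)
  have z: "(q - 1) * z = E * q ^ (k + l) * (q ^ l - 1)"
  proof -
    have "(q - 1) * z = (q - 1) * u (k + 2 * l) - (q - 1) * u (k + l)"
      by (simp add: z_def right_diff_distrib)
    also have "\<dots> = E * q ^ (k + 2 * l) - E * q ^ (k + l)"
      by (simp only: uj) simp
    also have "\<dots> = E * q ^ (k + l) * (q ^ l - 1)"
      by (simp only: q3) (simp add: right_diff_distrib)
    finally show ?thesis .
  qed
  have ql: "q ^ l \<noteq> 1" using qj assms(10) by simp
  have qnz: "q \<noteq> 0" using b0 by (simp add: q_def)
  have xn: "E * q ^ k * (1 - q ^ l) \<noteq> 0" using E0 qnz ql by simp
  then have x0: "x \<noteq> 0" using x by (metis mult_zero_right)
  have zn: "E * q ^ (k + l) * (q ^ l - 1) \<noteq> 0" using E0 qnz ql by simp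
  then have z0: "z \<noteq> 0" using z by (metis mult_zero_right)
  have "collinear {u k, u (k + l), u (k + 2 * l)}" using assms(11) by (simp add: u_def)
  then have "collinear {0, u k - u (k + l), u (k + 2 * l) - u (k + l)}"
    by (subst (asm) collinear_3) simp_all
  then have "collinear {0, x, z}" by (simp only: x_def z_def)
  then obtain c where c: "z = c *\<^sub>R x" using x0 z0 by (auto simp: collinear_lemma)
  then have "(q - 1) * z = of_real c * ((q - 1) * x)"
    by (simp add: scaleR_conv_of_real mult.left_commute)
  then have eq: "E * q ^ (k + l) * (q ^ l - 1) = of_real c * (E * q ^ k * (1 - q ^ l))"
    by (simp only: x z)
  have "E * q ^ k * (q ^ l - 1) * q ^ l = E * q ^ (k + l) * (q ^ l - 1)"
    by (simp add: power_add mult_ac)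
  also have "\<dots> = of_real c * (E * q ^ k * (1 - q ^ l))" by (rule eq)
  also have "\<dots> = E * q ^ k * (q ^ l - 1) * (- of_real c)"
    by (simp add: algebra_simps)
  finally have "E * q ^ k * (q ^ l - 1) * q ^ l = E * q ^ k * (q ^ l - 1) * (- of_real c)" .
  moreover have "E * q ^ k * (q ^ l - 1) \<noteq> 0" using E0 qnz ql by auto
  ultimately have qr: "q ^ l = - of_real c" by (metis mult_left_cancel)
  have "gauss_int (\<beta> ^ (n * l))" using gauss_pow[OF assms(1)] by blast
  moreover have "\<beta> ^ (n * l) = - of_real c" using qr by (simp add: q_def power_mult)
  ultimately have "\<beta> ^ (n * l) \<in> \<int>"
    by (auto simp: gauss_int_def complex_is_Int_iff elim!: Ints_cases) (metis of_int_minus)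
  moreover have "n * l \<ge> 1" using n1 assms(10) by simp
  ultimately show ?thesis by blast
qed

end
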